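(* Let $\Sigma$ be a complete hyperbolic surface without cusps and $L:=\Delta-2$. For all $R>0$ there exists $C>0$ with the following property: if $f$ is a twice-differentiable function on $\Sigma$ such that both $f$ and $Lf$ are bounded, and if $x\in\Sigma$ is such that $B_r(x)\cap\mathrm{Supp}(Lf)=\emptyset$ for some $r\geq R$, then $$|f(x)|\leq Ce^{-r}\|Lf\|_{L^\infty}.$$
   Context: $\Delta$ is the Laplace–Beltrami operator of the hyperbolic metric; $B_r(x)$ is the geodesic ball of radius $r$ about $x$. *)

theory Defs
  imports "HOL-Analysis.Analysis" "HOL-Probability.Essential_Supremum"
begin

definition HP :: "complex set" where
  "HP = {z. Im z > 0}"

definition hdist :: "complex \<Rightarrow> complex \<Rightarrow> real" where
  "hdist z w = arcosh (1 + (cmod (z - w))\<^sup>2 / (2 * Im z * Im w))"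

definition hball :: "complex \<Rightarrow> real \<Rightarrow> complex set" where
  "hball z r = {w \<in> HP. hdist z w < r}"

text \<open>Real 2x2 matrices (a,b,c,d), their product, and the Moebius action.\<close>
type_synonym mat2 = "real \<times> real \<times> real \<times> real"

definition mdet :: "mat2 \<Rightarrow> real" where
  "mdet M = (case M of (a,b,c,d) \<Rightarrow> a*d - b*c)"

definition mtrace :: "mat2 \<Rightarrow> real" where
  "mtrace M = (case M of (a,b,c,d) \<Rightarrow> a + d)"

definition mmult :: "mat2 \<Rightarrow> mat2 \<Rightarrow> mat2" where
  "mmult M N = (case M of (a,b,c,d) \<Rightarrow> case N of (a',b',c',d') \<Rightarrow>
      (a*a' + b*c', a*b' + b*d', c*a' + d*c', c*b' + d*d'))"

definition minv :: "mat2 \<Rightarrow> mat2" where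
  "minv M = (case M of (a,b,c,d) \<Rightarrow> (d, -b, -c, a))"

definition mid :: mat2 where "mid = (1,0,0,1)"

definition act :: "mat2 \<Rightarrow> complex \<Rightarrow> complex" where
  "act M z = (case M of (a,b,c,d) \<Rightarrow>
      (of_real a * z + of_real b) / (of_real c * z + of_real d))"

text \<open>A complete hyperbolic surface without cusps is \<open>HP / \<Gamma>\<close> for a torsion-free
  Fuchsian group \<open>\<Gamma> \<subseteq> SL(2,R)\<close> (discrete, acting freely and properly
  discontinuously on \<open>HP\<close>) containing no parabolic elements.\<close>
definition cuspfree_surface_group :: "mat2 set \<Rightarrow> bool" where
  "cuspfree_surface_group \<Gamma> \<longleftrightarrow>
     (\<forall>g\<in>\<Gamma>. mdet g = 1) \<and> mid \<in> \<Gamma> \<and>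
     (\<forall>g\<in>\<Gamma>. \<forall>h\<in>\<Gamma>. mmult g h \<in> \<Gamma>) \<and> (\<forall>g\<in>\<Gamma>. minv g \<in> \<Gamma>) \<and>
     (\<forall>K. compact K \<and> K \<subseteq> HP \<longrightarrow> finite {g\<in>\<Gamma>. act g ` K \<inter> K \<noteq> {}}) \<and>
     (\<forall>g\<in>\<Gamma>. \<forall>z\<in>HP. act g z = z \<longrightarrow> g = mid \<or> g = (-1,0,0,-1)) \<and>
     (\<forall>g\<in>\<Gamma>. g \<noteq> mid \<and> g \<noteq> (-1,0,0,-1) \<longrightarrow> \<bar>mtrace g\<bar> \<noteq> 2)"

text \<open>Functions on the surface = \<open>\<Gamma>\<close>-invariant functions on \<open>HP\<close>.\<close>
definition invariant_fun :: "mat2 set \<Rightarrow> (complex \<Rightarrow> real) \<Rightarrow> bool" where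
  "invariant_fun \<Gamma> f \<longleftrightarrow> (\<forall>g\<in>\<Gamma>. \<forall>z\<in>HP. f (act g z) = f z)"

definition px :: "(complex \<Rightarrow> real) \<Rightarrow> complex \<Rightarrow> real" where
  "px f z = deriv (\<lambda>t. f (z + of_real t)) 0"

definition py :: "(complex \<Rightarrow> real) \<Rightarrow> complex \<Rightarrow> real" where
  "py f z = deriv (\<lambda>t. f (z + \<i> * of_real t)) 0"

definition twice_diff_on :: "(complex \<Rightarrow> real) \<Rightarrow> complex set \<Rightarrow> bool" where
  "twice_diff_on f S \<longleftrightarrow> (\<forall>z\<in>S. f differentiable (at z) \<and>
      px f differentiable (at z) \<and> py f differentiable (at z))"

text \<open>Laplace-Beltrami operator of the hyperbolic metric \<open>y^{-2}(dx^2+dy^2)\<close>.\<close>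
definition hlap :: "(complex \<Rightarrow> real) \<Rightarrow> complex \<Rightarrow> real" where
  "hlap f z = (Im z)\<^sup>2 * (px (px f) z + py (py f) z)"

definition Lop :: "(complex \<Rightarrow> real) \<Rightarrow> complex \<Rightarrow> real" where
  "Lop f z = hlap f z - 2 * f z"

definition supp_HP :: "(complex \<Rightarrow> real) \<Rightarrow> complex set" where
  "supp_HP g = closure {z \<in> HP. g z \<noteq> 0} \<inter> HP"

end

theory Submission
  imports Defs
begin


lemma open_HP: "open HP"
  unfolding HP_def by (intro open_Collect_less continuous_intros)

lemma dir_deriv:
  fixes g :: "complex \<Rightarrow> real"
  assumes "(g has_derivative D) (at (z + of_real t * e))"
  shows "((\<lambda>s. g (z + of_real s * e)) has_real_derivative D e) (at t)"
proof -
  have lin: "linear D" using assms has_derivative_linear by blast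
  have "((\<lambda>s. z + of_real s * e) has_derivative (\<lambda>s. of_real s * e)) (at t)"
    by (auto intro!: derivative_eq_intros)
  from has_derivative_compose[OF this assms]
  have "((\<lambda>s. g (z + of_real s * e)) has_derivative (\<lambda>s. D (of_real s * e))) (at t)"
    by (simp add: o_def)
  moreover have "(\<lambda>s. D (of_real s * e)) = (\<lambda>s. s * D e)"
    using lin by (auto simp: scaleR_conv_of_real[symmetric] linear_scale)
  ultimately show ?thesis by (simp add: has_field_derivative_def mult.commute[of _ "D e"])
qed

lemma px_D: assumes "(g has_derivative D) (at z)" shows "px g z = D 1"
proof -
  have "((\<lambda>s. g (z + of_real s * 1)) has_real_derivative D 1) (at 0)"
    by (rule dir_deriv) (use assms in simp)
  then show ?thesis unfolding px_def by (simp add: DERIV_imp_deriv)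
qed

lemma py_D: assumes "(g has_derivative D) (at z)" shows "py g z = D \<i>"
proof -
  have "((\<lambda>s. g (z + of_real s * \<i>)) has_real_derivative D \<i>) (at 0)"
    by (rule dir_deriv) (use assms in simp)
  then show ?thesis unfolding py_def by (simp add: DERIV_imp_deriv mult.commute)
qed

lemma px_cong:
  assumes "open S" "z \<in> S" "\<And>w. w \<in> S \<Longrightarrow> g w = h w"
  shows "px g z = px h z" "py g z = py h z"
proof -
  have c1: "isCont (\<lambda>t::real. z + of_real t) 0" by (intro continuous_intros)
  have c2: "isCont (\<lambda>t::real. z + \<i> * of_real t) 0" by (intro continuous_intros)
  have "((\<lambda>t::real. z + of_real t) \<longlongrightarrow> z) (nhds 0)"
    by (auto intro!: tendsto_eq_intros filterlim_ident)
  then have "eventually (\<lambda>t. z + of_real t \<in> S) (nhds (0::real))"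
    using assms(1,2) by (rule topological_tendstoD)
  then have "eventually (\<lambda>t. g (z + of_real t) = h (z + of_real t)) (nhds (0::real))"
    by (rule eventually_mono) (use assms in auto)
  then show "px g z = px h z" unfolding px_def by (rule deriv_cong_ev) simp
  have "((\<lambda>t::real. z + \<i> * of_real t) \<longlongrightarrow> z) (nhds 0)"
    by (auto intro!: tendsto_eq_intros filterlim_ident)
  then have "eventually (\<lambda>t. z + \<i> * of_real t \<in> S) (nhds (0::real))"
    using assms(1,2) by (rule topological_tendstoD)
  then have "eventually (\<lambda>t. g (z + \<i> * of_real t) = h (z + \<i> * of_real t)) (nhds (0::real))"
    by (rule eventually_mono) (use assms in auto)
  then show "py g z = py h z" unfolding py_def by (rule deriv_cong_ev) simp
qed

lemma lin_p:
  fixes f h :: "complex \<Rightarrow> real"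
  assumes "f differentiable (at z)" "h differentiable (at z)"
  shows "px (\<lambda>w. a * f w + b * h w) z = a * px f z + b * px h z"
    "py (\<lambda>w. a * f w + b * h w) z = a * py f z + b * py h z"
proof -
  obtain Df Dh where f: "(f has_derivative Df) (at z)" and h: "(h has_derivative Dh) (at z)"
    using assms unfolding differentiable_def by blast
  have g: "((\<lambda>w. a * f w + b * h w) has_derivative (\<lambda>v. a * Df v + b * Dh v)) (at z)"
    by (auto intro!: derivative_eq_intros f h)
  show "px (\<lambda>w. a * f w + b * h w) z = a * px f z + b * px h z"
    using px_D[OF g] px_D[OF f] px_D[OF h] by simp
  show "py (\<lambda>w. a * f w + b * h w) z = a * py f z + b * py h z"
    using py_D[OF g] py_D[OF f] py_D[OF h] by simp
qed

lemma diff_transform: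
  fixes g h :: "complex \<Rightarrow> real"
  assumes "h differentiable (at z)" "open S" "z \<in> S" "\<And>w. w \<in> S \<Longrightarrow> g w = h w"
  shows "g differentiable (at z)"
proof -
  obtain D where "(h has_derivative D) (at z)" using assms(1) unfolding differentiable_def by blast
  then have "(g has_derivative D) (at z)"
    by (rule has_derivative_transform_within_open[OF _ assms(2,3)]) (use assms(4) in auto)
  then show ?thesis unfolding differentiable_def by blast
qed

lemma lin_twice:
  fixes f h :: "complex \<Rightarrow> real"
  assumes f: "twice_diff_on f HP" and h: "twice_diff_on h HP"
  shows "twice_diff_on (\<lambda>w. a * f w + b * h w) HP"
    "\<And>z. z \<in> HP \<Longrightarrow> hlap (\<lambda>w. a * f w + b * h w) z = a * hlap f z + b * hlap h z"
    "\<And>z. z \<in> HP \<Longrightarrow> px (\<lambda>w. a * f w + b * h w) z = a * px f z + b * px h z"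
    "\<And>z. z \<in> HP \<Longrightarrow> py (\<lambda>w. a * f w + b * h w) z = a * py f z + b * py h z"
proof -
  let ?g = "\<lambda>w. a * f w + b * h w"
  have ex: "\<And>w. w \<in> HP \<Longrightarrow> px ?g w = a * px f w + b * px h w"
    "\<And>w. w \<in> HP \<Longrightarrow> py ?g w = a * py f w + b * py h w"
    using lin_p f h unfolding twice_diff_on_def by blast+
  show pxg: "\<And>z. z \<in> HP \<Longrightarrow> px ?g z = a * px f z + b * px h z" by (rule ex)
  show "\<And>z. z \<in> HP \<Longrightarrow> py ?g z = a * py f z + b * py h z" by (rule ex)
  show "twice_diff_on ?g HP"
    unfolding twice_diff_on_def
  proof (intro ballI conjI)
    fix z assume z: "z \<in> HP"
    show "?g differentiable (at z)" using f h z unfolding twice_diff_on_def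
      by (auto intro!: derivative_intros)
    show "px ?g differentiable (at z)"
      by (rule diff_transform[OF _ open_HP z ex(1)]) (use f h z in \<open>auto simp: twice_diff_on_def intro!: derivative_intros\<close>)
    show "py ?g differentiable (at z)"
      by (rule diff_transform[OF _ open_HP z ex(2)]) (use f h z in \<open>auto simp: twice_diff_on_def intro!: derivative_intros\<close>)
  qed
  fix z assume z: "z \<in> HP"
  have "px (px ?g) z = px (\<lambda>w. a * px f w + b * px h w) z"
    by (rule px_cong[OF open_HP z ex(1)])
  also have "\<dots> = a * px (px f) z + b * px (px h) z"
    by (rule lin_p) (use f h z in \<open>auto simp: twice_diff_on_def\<close>)
  finally have 1: "px (px ?g) z = a * px (px f) z + b * px (px h) z" .
  have "py (py ?g) z = py (\<lambda>w. a * py f w + b * py h w) z"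
    by (rule px_cong[OF open_HP z ex(2)])
  also have "\<dots> = a * py (py f) z + b * py (py h) z"
    by (rule lin_p) (use f h z in \<open>auto simp: twice_diff_on_def\<close>)
  finally have 2: "py (py ?g) z = a * py (py f) z + b * py (py h) z" .
  show "hlap ?g z = a * hlap f z + b * hlap h z"
    unfolding hlap_def 1 2 by (simp add: algebra_simps)
qed

lemma atom:
  fixes h hx hy hxx hxy hyx hyy :: "complex \<Rightarrow> real"
  assumes d0: "\<And>z. z \<in> HP \<Longrightarrow> (h has_derivative (\<lambda>v. hx z * Re v + hy z * Im v)) (at z)"
    and d1: "\<And>z. z \<in> HP \<Longrightarrow> (hx has_derivative (\<lambda>v. hxx z * Re v + hxy z * Im v)) (at z)"
    and d2: "\<And>z. z \<in> HP \<Longrightarrow> (hy has_derivative (\<lambda>v. hyx z * Re v + hyy z * Im v)) (at z)"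
  shows "twice_diff_on h HP" "\<And>z. z \<in> HP \<Longrightarrow> px h z = hx z"
    "\<And>z. z \<in> HP \<Longrightarrow> py h z = hy z"
    "\<And>z. z \<in> HP \<Longrightarrow> hlap h z = (Im z)\<^sup>2 * (hxx z + hyy z)"
proof -
  show p1: "\<And>z. z \<in> HP \<Longrightarrow> px h z = hx z" using px_D[OF d0] by simp
  show p2: "\<And>z. z \<in> HP \<Longrightarrow> py h z = hy z" using py_D[OF d0] by simp
  show "twice_diff_on h HP"
    unfolding twice_diff_on_def
  proof (intro ballI conjI)
    fix z assume z: "z \<in> HP"
    show "h differentiable (at z)" using d0[OF z] unfolding differentiable_def by blast
    show "px h differentiable (at z)"
      by (rule diff_transform[OF _ open_HP z p1]) (use d1[OF z] in \<open>auto simp: differentiable_def\<close>)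
    show "py h differentiable (at z)"
      by (rule diff_transform[OF _ open_HP z p2]) (use d2[OF z] in \<open>auto simp: differentiable_def\<close>)
  qed
  fix z assume z: "z \<in> HP"
  have "px (px h) z = px hx z" by (rule px_cong[OF open_HP z p1])
  also have "\<dots> = hxx z" using px_D[OF d1[OF z]] by simp
  finally have 1: "px (px h) z = hxx z" .
  have "py (py h) z = py hy z" by (rule px_cong[OF open_HP z p2])
  also have "\<dots> = hyy z" using py_D[OF d2[OF z]] by simp
  finally have 2: "py (py h) z = hyy z" .
  show "hlap h z = (Im z)\<^sup>2 * (hxx z + hyy z)" unfolding hlap_def 1 2 ..
qed

definition Pf :: "real \<Rightarrow> real \<Rightarrow> complex \<Rightarrow> real" where
  "Pf a b z = (Re z - a)\<^sup>2 / (2*b*Im z) + Im z / (2*b) + b / (2*Im z)"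

definition Hf :: "real \<Rightarrow> real \<Rightarrow> real \<Rightarrow> real \<Rightarrow> complex \<Rightarrow> complex \<Rightarrow> complex \<Rightarrow> real" where
  "Hf \<alpha> a b \<delta> z0 p z = \<alpha> * Pf a b z + \<delta> * ((Re z - Re z0)\<^sup>2 + (Im z - Im z0)\<^sup>2)
      + (Re p * (Re z - Re z0) + Im p * (Im z - Im z0))"

lemma Hf_derivs:
  assumes b: "b > 0" and z: "z \<in> HP"
  shows "(Hf \<alpha> a b \<delta> z0 p has_derivative (\<lambda>v.
      (\<alpha> * (Re z - a) / (b * Im z) + 2 * \<delta> * (Re z - Re z0) + Re p) * Re v +
      (\<alpha> * (- (Re z - a)\<^sup>2 / (2*b*(Im z)\<^sup>2) + 1 / (2*b) - b / (2*(Im z)\<^sup>2)) + 2 * \<delta> * (Im z - Im z0) + Im p) * Im v)) (at z)"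
    "((\<lambda>z. \<alpha> * (Re z - a) / (b * Im z) + 2 * \<delta> * (Re z - Re z0) + Re p) has_derivative (\<lambda>v.
      (\<alpha> / (b * Im z) + 2 * \<delta>) * Re v + (- \<alpha> * (Re z - a) / (b * (Im z)\<^sup>2)) * Im v)) (at z)"
    "((\<lambda>z. \<alpha> * (- (Re z - a)\<^sup>2 / (2*b*(Im z)\<^sup>2) + 1 / (2*b) - b / (2*(Im z)\<^sup>2)) + 2 * \<delta> * (Im z - Im z0) + Im p)
      has_derivative (\<lambda>v.
      (- \<alpha> * (Re z - a) / (b * (Im z)\<^sup>2)) * Re v + (\<alpha> * ((Re z - a)\<^sup>2 / (b * (Im z)^3) + b / (Im z)^3) + 2 * \<delta>) * Im v)) (at z)"
proof -
  have y: "Im z > 0" using z by (simp add: HP_def)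
  show "(Hf \<alpha> a b \<delta> z0 p has_derivative (\<lambda>v.
      (\<alpha> * (Re z - a) / (b * Im z) + 2 * \<delta> * (Re z - Re z0) + Re p) * Re v +
      (\<alpha> * (- (Re z - a)\<^sup>2 / (2*b*(Im z)\<^sup>2) + 1 / (2*b) - b / (2*(Im z)\<^sup>2)) + 2 * \<delta> * (Im z - Im z0) + Im p) * Im v)) (at z)"
    unfolding Hf_def[abs_def] Pf_def
    apply (rule has_derivative_eq_rhs)
     apply (rule derivative_eq_intros refl | (use b y in simp; fail))+
    apply (rule ext)
    using b y apply (simp add: field_simps power2_eq_square)
    done
  show "((\<lambda>z. \<alpha> * (Re z - a) / (b * Im z) + 2 * \<delta> * (Re z - Re z0) + Re p) has_derivative (\<lambda>v.
      (\<alpha> / (b * Im z) + 2 * \<delta>) * Re v + (- \<alpha> * (Re z - a) / (b * (Im z)\<^sup>2)) * Im v)) (at z)"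
    apply (rule has_derivative_eq_rhs)
     apply (rule derivative_eq_intros refl | (use b y in simp; fail))+
    apply (rule ext)
    using b y apply (simp add: field_simps power2_eq_square)
    done
  show "((\<lambda>z. \<alpha> * (- (Re z - a)\<^sup>2 / (2*b*(Im z)\<^sup>2) + 1 / (2*b) - b / (2*(Im z)\<^sup>2)) + 2 * \<delta> * (Im z - Im z0) + Im p)
      has_derivative (\<lambda>v.
      (- \<alpha> * (Re z - a) / (b * (Im z)\<^sup>2)) * Re v + (\<alpha> * ((Re z - a)\<^sup>2 / (b * (Im z)^3) + b / (Im z)^3) + 2 * \<delta>) * Im v)) (at z)"
    apply (rule has_derivative_eq_rhs)
     apply (rule derivative_eq_intros refl | (use b y in simp; fail))+
    apply (rule ext)
    using b y apply (simp add: field_simps power2_eq_square power3_eq_cube)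
    done
qed

lemma Hf_props:
  assumes b: "b > 0"
  shows "twice_diff_on (Hf \<alpha> a b \<delta> z0 p) HP"
    "\<And>z. z \<in> HP \<Longrightarrow> hlap (Hf \<alpha> a b \<delta> z0 p) z = 2 * \<alpha> * Pf a b z + 4 * \<delta> * (Im z)\<^sup>2"
    "\<And>z. z \<in> HP \<Longrightarrow> px (Hf \<alpha> a b \<delta> z0 p) z = px (Hf \<alpha> a b \<delta> z0 0) z + Re p"
    "\<And>z. z \<in> HP \<Longrightarrow> py (Hf \<alpha> a b \<delta> z0 p) z = py (Hf \<alpha> a b \<delta> z0 0) z + Im p"
proof -
  have triv: "\<And>z. z \<in> HP \<Longrightarrow> z \<in> HP" by simp
  note A = atom[OF Hf_derivs(1)[OF b] Hf_derivs(2)[OF b] Hf_derivs(3)[OF b]]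
  note A0 = atom[OF Hf_derivs(1)[where p=0, OF b] Hf_derivs(2)[where p=0, OF b] Hf_derivs(3)[where p=0, OF b]]
  show "twice_diff_on (Hf \<alpha> a b \<delta> z0 p) HP" using A(1)[OF triv triv triv] .
  fix z assume z: "z \<in> HP"
  have y: "Im z > 0" using z by (simp add: HP_def)
  have h4: "hlap (Hf \<alpha> a b \<delta> z0 p) z = (Im z)\<^sup>2 *
      (\<alpha> / (b * Im z) + 2 * \<delta> + (\<alpha> * ((Re z - a)\<^sup>2 / (b * Im z ^ 3) + b / Im z ^ 3) + 2 * \<delta>))"
    by (rule A(4)[OF triv triv triv z])
  show "hlap (Hf \<alpha> a b \<delta> z0 p) z = 2 * \<alpha> * Pf a b z + 4 * \<delta> * (Im z)\<^sup>2"
    unfolding h4 Pf_def using b y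
    by (simp add: field_simps power2_eq_square power3_eq_cube)
  show "px (Hf \<alpha> a b \<delta> z0 p) z = px (Hf \<alpha> a b \<delta> z0 0) z + Re p"
    using A(2)[OF triv triv triv z] A0(2)[OF triv triv triv z] by simp
  show "py (Hf \<alpha> a b \<delta> z0 p) z = py (Hf \<alpha> a b \<delta> z0 0) z + Im p"
    using A(3)[OF triv triv triv z] A0(3)[OF triv triv triv z] by simp
qed

lemma real_max_test:
  fixes k m :: "real \<Rightarrow> real"
  assumes d: "d > 0" and dk: "\<And>t. \<bar>t\<bar> < d \<Longrightarrow> DERIV k t :> m t"
    and dm: "DERIV m 0 :> c" and mx: "\<And>t. \<bar>t\<bar> < d \<Longrightarrow> k t \<le> k 0"
  shows "m 0 = 0" "c \<le> 0"
proof -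
  show m0: "m 0 = 0"
    by (rule DERIV_local_max[OF dk[of 0] d]) (use d mx in auto)
  show "c \<le> 0"
  proof (rule ccontr)
    assume "\<not> c \<le> 0"
    then have "c > 0" by simp
    from DERIV_pos_inc_right[OF dm this] obtain e where e: "e > 0"
      and he: "\<And>h. h > 0 \<Longrightarrow> h < e \<Longrightarrow> m 0 < m (0 + h)" by blast
    define t where "t = min e d / 2"
    have t: "t > 0" "t < e" "t < d" using e d by (auto simp: t_def)
    obtain z where z: "0 < z" "z < t" "k t - k 0 = (t - 0) * m z"
      using MVT2[OF t(1), of k m] dk t by force
    have "m z > 0" using he[of z] z t m0 by simp
    then have "k t > k 0" using z t by (simp add: algebra_simps)
    with mx[of t] t show False by simp
  qed
qed

lemma max_test:
  fixes g :: "complex \<Rightarrow> real"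
  assumes g: "twice_diff_on g HP" and z: "z \<in> HP" and r: "\<rho> > 0"
    and mx: "\<And>w. w \<in> ball z \<rho> \<Longrightarrow> g w \<le> g z"
  shows "px g z = 0" "py g z = 0" "px (px g) z \<le> 0" "py (py g) z \<le> 0" "hlap g z \<le> 0"
proof -
  have y: "Im z > 0" using z by (simp add: HP_def)
  define d where "d = min \<rho> (Im z)"
  have d: "d > 0" using r y by (simp add: d_def)
  have inHP: "z + of_real t * e \<in> HP" if "\<bar>t\<bar> < d" "e = 1 \<or> e = \<i>" for t e
    using that y by (auto simp: HP_def d_def)
  have inB: "z + of_real t * e \<in> ball z \<rho>" if "\<bar>t\<bar> < d" "e = 1 \<or> e = \<i>" for t e
    using that by (auto simp: d_def dist_norm norm_mult)
  have dg: "\<And>w. w \<in> HP \<Longrightarrow> \<exists>D. (g has_derivative D) (at w)"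
    using g unfolding twice_diff_on_def differentiable_def by blast
  have x1: "\<And>t. \<bar>t\<bar> < d \<Longrightarrow> DERIV (\<lambda>s. g (z + of_real s * 1)) t :> px g (z + of_real t * 1)"
  proof -
    fix t :: real assume t: "\<bar>t\<bar> < d"
    obtain D where D: "(g has_derivative D) (at (z + of_real t * 1))" using dg inHP[OF t] by blast
    show "DERIV (\<lambda>s. g (z + of_real s * 1)) t :> px g (z + of_real t * 1)"
      using dir_deriv[OF D] px_D[OF D] by simp
  qed
  have y1: "\<And>t. \<bar>t\<bar> < d \<Longrightarrow> DERIV (\<lambda>s. g (z + of_real s * \<i>)) t :> py g (z + of_real t * \<i>)"
  proof -
    fix t :: real assume t: "\<bar>t\<bar> < d"
    obtain D where D: "(g has_derivative D) (at (z + of_real t * \<i>))" using dg inHP[OF t] by blast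
    show "DERIV (\<lambda>s. g (z + of_real s * \<i>)) t :> py g (z + of_real t * \<i>)"
      using dir_deriv[OF D] py_D[OF D] by simp
  qed
  obtain D1 where D1: "(px g has_derivative D1) (at z)" using g z unfolding twice_diff_on_def differentiable_def by blast
  obtain D2 where D2: "(py g has_derivative D2) (at z)" using g z unfolding twice_diff_on_def differentiable_def by blast
  have x2: "DERIV (\<lambda>s. px g (z + of_real s * 1)) 0 :> px (px g) z"
    using dir_deriv[of "px g" D1 z 0 1] D1 px_D[OF D1] by simp
  have y2: "DERIV (\<lambda>s. py g (z + of_real s * \<i>)) 0 :> py (py g) z"
    using dir_deriv[of "py g" D2 z 0 \<i>] D2 py_D[OF D2] by simp
  have mx1: "\<And>t. \<bar>t\<bar> < d \<Longrightarrow> g (z + of_real t * 1) \<le> g (z + of_real 0 * 1)"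
    using mx inB[of _ 1] by simp
  have mx2: "\<And>t. \<bar>t\<bar> < d \<Longrightarrow> g (z + of_real t * \<i>) \<le> g (z + of_real 0 * \<i>)"
    using mx inB[of _ \<i>] by simp
  note R1 = real_max_test[OF d x1 x2 mx1]
  note R2 = real_max_test[OF d y1 y2 mx2]
  show "px g z = 0" using R1(1) by simp
  show "py g z = 0" using R2(1) by simp
  show "px (px g) z \<le> 0" using R1(2) .
  show "py (py g) z \<le> 0" using R2(2) .
  then show "hlap g z \<le> 0" using R1(2) unfolding hlap_def
    by (simp add: mult_nonneg_nonpos)
qed

lemma Pf_eq:
  assumes "Im c > 0" "Im z > 0"
  shows "Pf (Re c) (Im c) z = 1 + (cmod (c - z))\<^sup>2 / (2 * Im c * Im z)"
  using assms unfolding Pf_def cmod_power2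
  by (simp add: field_simps power2_eq_square)

lemma Pf_ge1:
  assumes "Im c > 0" "Im z > 0"
  shows "Pf (Re c) (Im c) z \<ge> 1"
  using assms by (simp add: Pf_eq)

lemma Pf_center: "Im c > 0 \<Longrightarrow> Pf (Re c) (Im c) c = 1"
  by (simp add: Pf_eq)

lemma hball_iff:
  assumes c: "c \<in> HP" and z: "z \<in> HP" and r: "r > 0"
  shows "z \<in> hball c r \<longleftrightarrow> Pf (Re c) (Im c) z < cosh r"
proof -
  have yc: "Im c > 0" and yz: "Im z > 0" using c z by (auto simp: HP_def)
  have "hdist c z = arcosh (Pf (Re c) (Im c) z)" unfolding hdist_def using yc yz by (simp add: Pf_eq)
  moreover have "arcosh (Pf (Re c) (Im c) z) < r \<longleftrightarrow> Pf (Re c) (Im c) z < cosh r"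
  proof -
    have "arcosh (Pf (Re c) (Im c) z) < arcosh (cosh r) \<longleftrightarrow> Pf (Re c) (Im c) z < cosh r"
      by (rule arcosh_less_iff_real) (use Pf_ge1[OF yc yz] cosh_real_ge_1 in auto)
    then show ?thesis using r by (simp add: arcosh_cosh_real)
  qed
  ultimately show ?thesis using z unfolding hball_def by simp
qed

definition Tset :: "complex \<Rightarrow> real \<Rightarrow> complex set" where
  "Tset c K = {z. (cmod (c - z))\<^sup>2 \<le> 2 * (K - 1) * Im c * Im z}"

lemma Tset_sub:
  assumes "Im c > 0" "K \<ge> 1"
  shows "Tset c K \<subseteq> HP"
proof
  fix z assume z: "z \<in> Tset c K"
  show "z \<in> HP"
  proof (rule ccontr)
    assume "z \<notin> HP"
    then have "Im z \<le> 0" by (simp add: HP_def)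
    then have "2 * (K - 1) * Im c * Im z \<le> 0" using assms
      by (simp add: mult_nonneg_nonpos)
    moreover have "(cmod (c - z))\<^sup>2 \<le> 2 * (K - 1) * Im c * Im z" using z unfolding Tset_def by simp
    ultimately have "(cmod (c - z))\<^sup>2 \<le> 0" by linarith
    then have "cmod (c - z) = 0" by simp
    then show False using assms \<open>Im z \<le> 0\<close> by simp
  qed
qed

lemma Tset_iff:
  assumes "Im c > 0" "Im z > 0"
  shows "z \<in> Tset c K \<longleftrightarrow> Pf (Re c) (Im c) z \<le> K"
  using assms unfolding Tset_def Pf_eq[OF assms]
  by (simp add: field_simps)

lemma Tset_compact:
  assumes c: "Im c > 0" and K: "K \<ge> 1"
  shows "compact (Tset c K)"
proof (subst compact_eq_bounded_closed, intro conjI)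
  show "closed (Tset c K)" unfolding Tset_def
    by (intro closed_Collect_le continuous_intros)
  define cc where "cc = 2 * (K - 1) * Im c"
  have cc: "cc \<ge> 0" using c K by (simp add: cc_def)
  have "Tset c K \<subseteq> cball c (cc + Im c + 1)"
  proof
    fix z assume z: "z \<in> Tset c K"
    define d where "d = cmod (c - z)"
    have d0: "d \<ge> 0" by (simp add: d_def)
    have "Im z \<le> Im c + d" unfolding d_def using abs_Im_le_cmod[of "c - z"] by simp
    then have "cc * Im z \<le> cc * (Im c + d)" using cc by (intro mult_left_mono)
    moreover have "d\<^sup>2 \<le> cc * Im z" using z unfolding Tset_def d_def cc_def by simp
    ultimately have dd: "d\<^sup>2 \<le> cc * (Im c + d)" by linarith
    have "d \<le> cc + Im c + 1"
    proof (rule ccontr)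
      assume "\<not> d \<le> cc + Im c + 1"
      then have dl: "d > cc + Im c + 1" by simp
      have "d * d > d * (cc + Im c)" using dl d0 c cc by (intro mult_strict_left_mono) auto
      moreover have "Im c * d \<ge> Im c * cc" using dl c by (intro mult_left_mono) auto
      ultimately have "d\<^sup>2 > cc * (Im c + d)" by (simp add: power2_eq_square algebra_simps)
      then show False using dd by simp
    qed
    then show "z \<in> cball c (cc + Im c + 1)" by (simp add: d_def dist_norm)
  qed
  then show "bounded (Tset c K)" using bounded_cball bounded_subset by blast
qed

lemma Pf_cont: "b > 0 \<Longrightarrow> continuous_on HP (Pf a b)"
  unfolding Pf_def[abs_def] HP_def
  by (intro continuous_intros) auto

lemma twice_cont: "twice_diff_on f HP \<Longrightarrow> continuous_on HP f"
  unfolding twice_diff_on_def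
  by (meson continuous_at_imp_continuous_on differentiable_imp_continuous_within)

lemma cplx_diff:
  fixes u v :: "complex \<Rightarrow> real"
  assumes "u differentiable (at z)" "v differentiable (at z)"
  shows "(\<lambda>z. of_real (u z) + \<i> * of_real (v z) :: complex) differentiable (at z)"
proof -
  obtain U V where U: "(u has_derivative U) (at z)" and V: "(v has_derivative V) (at z)"
    using assms unfolding differentiable_def by blast
  have "((\<lambda>z. of_real (u z) + \<i> * of_real (v z) :: complex) has_derivative
      (\<lambda>h. of_real (U h) + \<i> * of_real (V h))) (at z)"
    by (intro derivative_intros U V)
  then show ?thesis unfolding differentiable_def by blast
qed
lemma inner_bound: "\<bar>Re p * Re v + Im p * Im v\<bar> \<le> cmod p * cmod v"
proof -
  have "Re p * Re v + Im p * Im v = inner p v" by (simp add: inner_complex_def)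
  then show ?thesis using Cauchy_Schwarz_ineq2[of p v] by simp
qed

lemma step1:
  fixes f :: "complex \<Rightarrow> real"
  assumes f: "twice_diff_on f HP" and B: "\<And>z. z \<in> HP \<Longrightarrow> \<bar>f z\<bar> \<le> B"
    and N: "negligible N" and LM: "\<And>z. z \<in> HP \<Longrightarrow> z \<notin> N \<Longrightarrow> \<bar>Lop f z\<bar> \<le> M"
    and x0: "x0 \<in> HP"
  shows "f x0 \<le> M / 2"
proof (rule ccontr)
  assume "\<not> f x0 \<le> M / 2"
  then have fx0: "f x0 > M / 2" by simp
  define \<epsilon> where "\<epsilon> = (f x0 - M / 2) / 4"
  have e: "\<epsilon> > 0" using fx0 by (simp add: \<epsilon>_def)
  define a where "a = Re x0"
  define b where "b = Im x0"
  have b: "b > 0" using x0 by (simp add: b_def HP_def)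
  define \<psi> where "\<psi> = Pf a b"
  define w where "w = (\<lambda>z. f z - \<epsilon> * \<psi> z)"
  have B0: "B \<ge> 0" using B[OF x0] by simp
  define K where "K = (2 * B + \<epsilon>) / \<epsilon> + 1"
  have K1: "K \<ge> 1" using B0 e by (simp add: K_def)
  have eK: "\<epsilon> * K = 2 * B + 2 * \<epsilon>" using e by (simp add: K_def field_simps)
  define T where "T = Tset x0 K"
  have TH: "T \<subseteq> HP" unfolding T_def by (rule Tset_sub) (use b K1 b_def in auto)
  have Tc: "compact T" unfolding T_def by (rule Tset_compact) (use b K1 b_def in auto)
  have x0T: "x0 \<in> T" unfolding T_def Tset_def using K1 b b_def
    by (simp add: mult_nonneg_nonneg)
  have wc: "continuous_on HP w" unfolding w_def \<psi>_def
    by (intro continuous_intros twice_cont[OF f] Pf_cont b)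
  obtain z0 where z0T: "z0 \<in> T" and z0max: "\<And>y. y \<in> T \<Longrightarrow> w y \<le> w z0"
    using continuous_attains_sup[OF Tc _ continuous_on_subset[OF wc TH]] x0T by blast
  have psi_x0: "\<psi> x0 = 1" unfolding \<psi>_def a_def b_def using Pf_center b b_def by simp
  have wx0: "w x0 = f x0 - \<epsilon>" by (simp add: w_def psi_x0)
  have W: "w z \<le> w z0" if z: "z \<in> HP" for z
  proof (cases "z \<in> T")
    case True then show ?thesis by (rule z0max)
  next
    case False
    have yz: "Im z > 0" using z by (simp add: HP_def)
    have "\<psi> z > K" using False Tset_iff[of x0 z K] b yz unfolding T_def \<psi>_def a_def b_def by simp
    then have "\<epsilon> * \<psi> z > \<epsilon> * K" using e by simp
    then have "w z < B - (2 * B + 2 * \<epsilon>)" using B[OF z] eK unfolding w_def by simp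
    also have "\<dots> \<le> w x0" using B[OF x0] wx0 e by (simp add: abs_le_iff)
    also have "\<dots> \<le> w z0" by (rule z0max[OF x0T])
    finally show ?thesis by simp
  qed
  have z0: "z0 \<in> HP" using z0T TH by blast
  have y0: "Im z0 > 0" using z0 by (simp add: HP_def)
  define \<rho> where "\<rho> = Im z0 / 2"
  have \<rho>: "\<rho> > 0" using y0 by (simp add: \<rho>_def)
  have cbH: "cball z0 \<rho> \<subseteq> HP"
  proof
    fix z assume "z \<in> cball z0 \<rho>"
    then have "cmod (z0 - z) \<le> \<rho>" by (simp add: dist_norm)
    then have "\<bar>Im (z0 - z)\<bar> \<le> \<rho>" using abs_Im_le_cmod order_trans by blast
    then have "Im z0 - Im z \<le> \<rho>" using abs_le_D1 by simp
    then show "z \<in> HP" using y0 by (simp add: HP_def \<rho>_def)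
  qed
  define Y where "Y = Im z0 + \<rho>"
  define \<delta> where "\<delta> = \<epsilon> / (\<rho>\<^sup>2 + 2 * Y\<^sup>2 + 1)"
  have den: "\<rho>\<^sup>2 + 2 * Y\<^sup>2 + 1 > 0"
    using zero_le_power2[of \<rho>] zero_le_power2[of Y] by linarith
  have d: "\<delta> > 0" using e den by (simp add: \<delta>_def)
  define H where "H = (\<lambda>p. Hf \<epsilon> a b \<delta> z0 p)"
  define g where "g = (\<lambda>p w. 1 * f w + (-1) * H p w)"
  have Hz: "H p z = \<epsilon> * \<psi> z + \<delta> * (cmod (z - z0))\<^sup>2 + (Re p * Re (z - z0) + Im p * Im (z - z0))" for p z
    unfolding H_def Hf_def \<psi>_def cmod_power2 by simp
  have gz: "g p z = w z - \<delta> * (cmod (z - z0))\<^sup>2 - (Re p * Re (z - z0) + Im p * Im (z - z0))" for p z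
    unfolding g_def Hz w_def by simp
  have gz0: "g p z0 = w z0" for p by (simp add: gz)
  have gtw: "twice_diff_on (g p) HP" for p
    unfolding g_def by (rule lin_twice(1)[OF f]) (unfold H_def, rule Hf_props(1)[OF b])
  have gcont: "continuous_on HP (g p)" for p by (rule twice_cont[OF gtw])
  have maxp: "\<exists>z1 \<in> ball z0 \<rho>. (\<exists>r>0. \<forall>v\<in>ball z1 r. g p v \<le> g p z1) \<and> g p z1 \<ge> w z0"
    if p: "cmod p < \<delta> * \<rho>" for p
  proof -
    obtain z1 where z1: "z1 \<in> cball z0 \<rho>" and z1m: "\<And>v. v \<in> cball z0 \<rho> \<Longrightarrow> g p v \<le> g p z1"
      using continuous_attains_sup[OF compact_cball _ continuous_on_subset[OF gcont cbH]] \<rho>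
      by (metis centre_in_cball empty_iff less_le)
    have ge: "g p z1 \<ge> w z0" using z1m[of z0] \<rho> gz0 by simp
    have "dist z0 z1 < \<rho>"
    proof (rule ccontr)
      assume "\<not> dist z0 z1 < \<rho>"
      then have dz: "cmod (z1 - z0) = \<rho>" using z1 by (simp add: dist_norm norm_minus_commute)
      have "\<bar>Re p * Re (z1 - z0) + Im p * Im (z1 - z0)\<bar> \<le> cmod p * \<rho>"
        using inner_bound[of p "z1 - z0"] dz by simp
      also have "\<dots> < \<delta> * \<rho> * \<rho>" using p \<rho> by simp
      finally have L: "\<bar>Re p * Re (z1 - z0) + Im p * Im (z1 - z0)\<bar> < \<delta> * \<rho>\<^sup>2"
        by (simp add: power2_eq_square mult.assoc)
      have "w z1 \<le> w z0" using W[of z1] cbH z1 by blast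
      then have "g p z1 < w z0" unfolding gz dz using L by linarith
      then show False using ge by simp
    qed
    have "ball z1 (\<rho> - dist z0 z1) \<subseteq> cball z0 \<rho>"
    proof
      fix v assume "v \<in> ball z1 (\<rho> - dist z0 z1)"
      then have "dist z1 v < \<rho> - dist z0 z1" by simp
      then show "v \<in> cball z0 \<rho>" using dist_triangle[of z0 v z1] by simp
    qed
    then show ?thesis using z1m ge \<open>dist z0 z1 < \<rho>\<close>
      by (intro bexI[of _ z1]) (auto intro!: exI[of _ "\<rho> - dist z0 z1"])
  qed
  define \<Phi> where "\<Phi> = (\<lambda>z. of_real (px f z - px (H 0) z) + \<i> * of_real (py f z - py (H 0) z))"
  have crit: "\<Phi> z1 = p \<and> hlap (g p) z1 \<le> 0"
    if z1: "z1 \<in> ball z0 \<rho>" and r: "r > 0" and mx: "\<And>v. v \<in> ball z1 r \<Longrightarrow> g p v \<le> g p z1" for p z1 r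
  proof -
    have z1H: "z1 \<in> HP" using z1 cbH by auto
    note MT = max_test[OF gtw z1H r mx]
    have Htw: "twice_diff_on (H p) HP" unfolding H_def by (rule Hf_props(1)[OF b])
    have e1: "px (g p) z1 = 1 * px f z1 + (-1) * px (H p) z1"
      unfolding g_def by (rule lin_twice(3)[OF f Htw z1H])
    have e2: "py (g p) z1 = 1 * py f z1 + (-1) * py (H p) z1"
      unfolding g_def by (rule lin_twice(4)[OF f Htw z1H])
    have e3: "px (H p) z1 = px (H 0) z1 + Re p" "py (H p) z1 = py (H 0) z1 + Im p"
      unfolding H_def by (rule Hf_props(3)[OF b z1H], rule Hf_props(4)[OF b z1H])
    have q1: "px f z1 - px (H 0) z1 = Re p" "py f z1 - py (H 0) z1 = Im p"
      using MT(1,2) e1 e2 e3 by simp_all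
    have "\<Phi> z1 = of_real (Re p) + \<i> * of_real (Im p)"
      unfolding \<Phi>_def q1 by (rule refl)
    then have "\<Phi> z1 = p" by (simp add: complex_eq_iff)
    then show ?thesis using MT(5) by simp
  qed
  have Phid: "\<Phi> differentiable (at z)" if z: "z \<in> HP" for z
  proof -
    have H0: "twice_diff_on (H 0) HP" unfolding H_def by (rule Hf_props(1)[OF b])
    have "px f differentiable (at z)" "py f differentiable (at z)"
      "px (H 0) differentiable (at z)" "py (H 0) differentiable (at z)"
      using f H0 z unfolding twice_diff_on_def by auto
    then show ?thesis unfolding \<Phi>_def
      by (intro cplx_diff differentiable_diff)
  qed
  have "\<exists>p z1. cmod p < \<delta> * \<rho> \<and> z1 \<in> ball z0 \<rho> \<and> z1 \<notin> N \<and>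
      (\<exists>r>0. \<forall>v\<in>ball z1 r. g p v \<le> g p z1) \<and> g p z1 \<ge> w z0"
  proof (rule ccontr)
    assume nex: "\<not> ?thesis"
    have "ball 0 (\<delta> * \<rho>) \<subseteq> \<Phi> ` (N \<inter> ball z0 \<rho>)"
    proof
      fix p :: complex assume "p \<in> ball 0 (\<delta> * \<rho>)"
      then have p: "cmod p < \<delta> * \<rho>" by simp
      obtain z1 r where z1: "z1 \<in> ball z0 \<rho>" and r: "r > 0"
        and mx: "\<forall>v\<in>ball z1 r. g p v \<le> g p z1" and ge: "g p z1 \<ge> w z0"
        using maxp[OF p] by (elim bexE conjE exE) (rule that, assumption+)
      have "z1 \<in> N"
      proof (rule ccontr)
        assume "z1 \<notin> N"
        then have "cmod p < \<delta> * \<rho> \<and> z1 \<in> ball z0 \<rho> \<and> z1 \<notin> N \<and>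
          (\<exists>r>0. \<forall>v\<in>ball z1 r. g p v \<le> g p z1) \<and> g p z1 \<ge> w z0" using p z1 r mx ge by blast
        then show False by (rule notE[OF nex, OF exI[of _ p], OF exI[of _ z1]])
      qed
      moreover have "\<Phi> z1 = p" using crit[OF z1 r] mx by blast
      ultimately show "p \<in> \<Phi> ` (N \<inter> ball z0 \<rho>)" using z1 by blast
    qed
    moreover have "negligible (\<Phi> ` (N \<inter> ball z0 \<rho>))"
    proof (rule negligible_differentiable_image_negligible)
      show "DIM(complex) \<le> DIM(complex)" by simp
      show "negligible (N \<inter> ball z0 \<rho>)" by (rule negligible_subset[OF N]) auto
      show "\<Phi> differentiable_on (N \<inter> ball z0 \<rho>)"
        unfolding differentiable_on_def
      proof
        fix z assume "z \<in> N \<inter> ball z0 \<rho>"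
        then have zH: "z \<in> HP" using cbH by auto
        show "\<Phi> differentiable (at z within N \<inter> ball z0 \<rho>)"
          using Phid[OF zH] by (rule differentiable_at_withinI)
      qed
    qed
    ultimately have "negligible (ball (0::complex) (\<delta> * \<rho>))" by (rule negligible_subset[rotated])
    moreover have "ball (0::complex) (\<delta> * \<rho>) \<noteq> {}" using mult_pos_pos[OF d \<rho>] by simp
    ultimately show False using open_not_negligible[of "ball (0::complex) (\<delta> * \<rho>)"] by simp
  qed
  then obtain p z1 r where p: "cmod p < \<delta> * \<rho>" and z1: "z1 \<in> ball z0 \<rho>" and z1N: "z1 \<notin> N"
    and r: "r > 0" and mx: "\<forall>v\<in>ball z1 r. g p v \<le> g p z1" and ge: "g p z1 \<ge> w z0"
    by blast
  have z1H: "z1 \<in> HP" using z1 cbH by auto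
  have y1: "Im z1 > 0" using z1H by (simp add: HP_def)
  have mx': "\<And>v. v \<in> ball z1 r \<Longrightarrow> g p v \<le> g p z1" using mx by blast
  have hl: "hlap (g p) z1 \<le> 0" using crit[OF z1 r mx'] by blast
  have Htw: "twice_diff_on (H p) HP" unfolding H_def by (rule Hf_props(1)[OF b])
  have hl2: "hlap (g p) z1 = 1 * hlap f z1 + (-1) * hlap (H p) z1"
    unfolding g_def by (rule lin_twice(2)[OF f Htw z1H])
  have hl3: "hlap (H p) z1 = 2 * \<epsilon> * \<psi> z1 + 4 * \<delta> * (Im z1)\<^sup>2"
    unfolding H_def \<psi>_def by (rule Hf_props(2)[OF b z1H])
  have "\<bar>Lop f z1\<bar> \<le> M" by (rule LM[OF z1H z1N])
  then have "hlap f z1 - 2 * f z1 \<ge> - M" unfolding Lop_def by simp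
  then have A1: "f z1 - \<epsilon> * \<psi> z1 \<le> 2 * \<delta> * (Im z1)\<^sup>2 + M / 2"
    using hl hl2 hl3 by simp
  have dz1: "cmod (z1 - z0) < \<rho>" using z1 by (simp add: dist_norm norm_minus_commute)
  have "\<bar>Im (z1 - z0)\<bar> \<le> cmod (z1 - z0)" by (rule abs_Im_le_cmod)
  then have "Im z1 \<le> Y" using dz1 unfolding Y_def by simp
  then have Y2: "(Im z1)\<^sup>2 \<le> Y\<^sup>2" using y1 by (intro power_mono) auto
  have "\<bar>Re p * Re (z1 - z0) + Im p * Im (z1 - z0)\<bar> \<le> cmod p * cmod (z1 - z0)" by (rule inner_bound)
  also have "\<dots> \<le> (\<delta> * \<rho>) * \<rho>" using p dz1 mult_pos_pos[OF d \<rho>] by (intro mult_mono) auto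
  finally have Lb: "\<bar>Re p * Re (z1 - z0) + Im p * Im (z1 - z0)\<bar> \<le> \<delta> * \<rho>\<^sup>2"
    by (simp add: power2_eq_square mult.assoc)
  have "\<delta> * (cmod (z1 - z0))\<^sup>2 \<ge> 0" using d by simp
  then have A2: "g p z1 \<le> w z1 + \<delta> * \<rho>\<^sup>2" unfolding gz using Lb by linarith
  have A3: "w z0 \<ge> f x0 - \<epsilon>" using W[OF x0] wx0 by simp
  have A4: "2 * \<delta> * (Im z1)\<^sup>2 \<le> 2 * \<delta> * Y\<^sup>2" using Y2 d by simp
  have "f x0 - \<epsilon> \<le> M / 2 + \<delta> * (\<rho>\<^sup>2 + 2 * Y\<^sup>2)"
    using A1 A2 A3 A4 ge unfolding w_def by (simp add: algebra_simps)
  moreover have "\<delta> * (\<rho>\<^sup>2 + 2 * Y\<^sup>2) < \<epsilon>"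
  proof -
    have "\<delta> * (\<rho>\<^sup>2 + 2 * Y\<^sup>2) < \<delta> * (\<rho>\<^sup>2 + 2 * Y\<^sup>2 + 1)" using d by simp
    also have "\<dots> = \<epsilon>" unfolding \<delta>_def using den by simp
    finally show ?thesis .
  qed
  moreover have "\<And>a m D :: real. a - (a - m / 2) / 4 \<le> m / 2 + D \<Longrightarrow> D < (a - m / 2) / 4 \<Longrightarrow> m / 2 < a \<Longrightarrow> False"
    by (simp add: field_simps)
  ultimately show False using fx0 unfolding \<epsilon>_def by blast
qed
lemma step2:
  fixes f :: "complex \<Rightarrow> real"
  assumes f: "twice_diff_on f HP" and Mb: "\<And>z. z \<in> HP \<Longrightarrow> f z \<le> M / 2" and M: "M \<ge> 0"
    and x: "x \<in> HP" and r: "r > 0"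
    and L0: "\<And>z. z \<in> HP \<Longrightarrow> z \<in> hball x r \<Longrightarrow> Lop f z = 0"
  shows "f x \<le> M / (2 * cosh r)"
proof -
  define a where "a = Re x"
  define b where "b = Im x"
  have b: "b > 0" using x by (simp add: b_def HP_def)
  define \<psi> where "\<psi> = Pf a b"
  define K where "K = cosh r"
  have K1: "K \<ge> 1" unfolding K_def by (rule cosh_real_ge_1)
  have Kp: "K > 0" using K1 by simp
  define A where "A = M / (2 * K)"
  have A0: "A \<ge> 0" using M Kp by (simp add: A_def)
  have AK: "A * K = M / 2" using Kp by (simp add: A_def)
  define H where "H = Hf A a b 0 x 0"
  define G where "G = (\<lambda>w. 1 * f w + (-1) * H w)"
  have Gz: "G z = f z - A * \<psi> z" for z unfolding G_def H_def Hf_def \<psi>_def by simp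
  have Htw: "twice_diff_on H HP" unfolding H_def by (rule Hf_props(1)[OF b])
  have Gtw: "twice_diff_on G HP" unfolding G_def by (rule lin_twice(1)[OF f Htw])
  define T where "T = Tset x K"
  have TH: "T \<subseteq> HP" unfolding T_def by (rule Tset_sub) (use b K1 b_def in auto)
  have Tc: "compact T" unfolding T_def by (rule Tset_compact) (use b K1 b_def in auto)
  have xT: "x \<in> T" unfolding T_def Tset_def using K1 b b_def
    by (simp add: mult_nonneg_nonneg)
  obtain z1 where z1T: "z1 \<in> T" and z1m: "\<And>y. y \<in> T \<Longrightarrow> G y \<le> G z1"
    using continuous_attains_sup[OF Tc _ continuous_on_subset[OF twice_cont[OF Gtw] TH]] xT by blast
  have z1H: "z1 \<in> HP" using z1T TH by blast
  have y1: "Im z1 > 0" using z1H by (simp add: HP_def)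
  have psiT: "\<psi> z \<le> K" if "z \<in> T" for z
  proof -
    have "Im z > 0" using that TH by (auto simp: HP_def)
    then show ?thesis using Tset_iff[of x z K] that b b_def unfolding T_def by (auto simp: \<psi>_def a_def)
  qed
  have G1: "G z1 \<le> 0"
  proof (cases "\<psi> z1 < K")
    case True
    have hb: "z1 \<in> hball x r" using hball_iff[OF x z1H r] True unfolding \<psi>_def a_def b_def K_def by simp
    have op: "open (HP \<inter> \<psi> -` {..<K})"
      by (rule continuous_open_preimage) (use Pf_cont[OF b] open_HP in \<open>auto simp: \<psi>_def\<close>)
    have "z1 \<in> HP \<inter> \<psi> -` {..<K}" using z1H True by simp
    then obtain e where e: "e > 0" and eb: "ball z1 e \<subseteq> HP \<inter> \<psi> -` {..<K}"
      using op open_contains_ball by blast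
    have "ball z1 e \<subseteq> T"
    proof
      fix v assume "v \<in> ball z1 e"
      then have "v \<in> HP" "\<psi> v < K" using eb by auto
      then show "v \<in> T" using Tset_iff[of x v K] b b_def unfolding T_def \<psi>_def a_def HP_def by auto
    qed
    then have mx: "\<And>v. v \<in> ball z1 e \<Longrightarrow> G v \<le> G z1" using z1m by blast
    have hl: "hlap G z1 \<le> 0" by (rule max_test(5)[OF Gtw z1H e mx])
    have hl2: "hlap G z1 = 1 * hlap f z1 + (-1) * hlap H z1"
      unfolding G_def by (rule lin_twice(2)[OF f Htw z1H])
    have hl3: "hlap H z1 = 2 * A * \<psi> z1 + 4 * 0 * (Im z1)\<^sup>2"
      unfolding H_def \<psi>_def by (rule Hf_props(2)[OF b z1H])
    have "Lop f z1 = 0" by (rule L0[OF z1H hb])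
    then have "hlap f z1 = 2 * f z1" unfolding Lop_def by simp
    then show ?thesis using hl hl2 hl3 Gz[of z1] by simp
  next
    case False
    then have "A * K \<le> A * \<psi> z1" using A0 by (intro mult_left_mono) auto
    then show ?thesis using Gz[of z1] Mb[OF z1H] AK by simp
  qed
  have "\<psi> x = 1" unfolding \<psi>_def a_def b_def using Pf_center b b_def by simp
  then have "G x = f x - A" using Gz by simp
  then have "f x \<le> A" using z1m[OF xT] G1 by simp
  then show ?thesis unfolding A_def K_def .
qed



lemma HP_leb: "HP \<in> sets lebesgue"
  by (intro sets_completionI_sets) (simp add: borel_open open_HP)

lemma HP_nonneg: "\<not> negligible HP"
proof -
  have "\<i> \<in> HP" by (simp add: HP_def)
  then show ?thesis using open_not_negligible[OF open_HP] by blast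
qed

lemma neg_fun:
  fixes f :: "complex \<Rightarrow> real"
  assumes f: "twice_diff_on f HP"
  shows "twice_diff_on (\<lambda>w. (-1) * f w + 0 * f w) HP"
    "\<And>z. z \<in> HP \<Longrightarrow> Lop (\<lambda>w. (-1) * f w + 0 * f w) z = - Lop f z"
proof -
  show "twice_diff_on (\<lambda>w. (-1) * f w + 0 * f w) HP" by (rule lin_twice(1)[OF f f])
  fix z assume z: "z \<in> HP"
  show "Lop (\<lambda>w. (-1) * f w + 0 * f w) z = - Lop f z"
    unfolding Lop_def lin_twice(2)[OF f f z] by simp
qed

lemma cosh_bound: "(r::real) \<ge> 0 \<Longrightarrow> M \<ge> 0 \<Longrightarrow> M / (2 * cosh r) \<le> exp (- r) * M"
proof -
  assume r: "r \<ge> 0" and M: "M \<ge> 0"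
  have c: "2 * cosh r = exp r + exp (- r)" by (simp add: cosh_def)
  have "exp r \<le> 2 * cosh r" unfolding c by simp
  then have "M / (2 * cosh r) \<le> M / exp r" using M by (intro divide_left_mono) auto
  also have "\<dots> = exp (- r) * M" by (simp add: exp_minus field_simps)
  finally show ?thesis .
qed

theorem lemma2p3:
  fixes \<Gamma> :: "mat2 set" and R :: real
  assumes "cuspfree_surface_group \<Gamma>" and "R > 0"
  shows "\<exists>C>0. \<forall>(f :: complex \<Rightarrow> real) x r.
           invariant_fun \<Gamma> f \<and> twice_diff_on f HP \<and>
           bounded (f ` HP) \<and> bounded (Lop f ` HP) \<and>
           x \<in> HP \<and> r \<ge> R \<and> hball x r \<inter> supp_HP (Lop f) = {}
           \<longrightarrow> ereal \<bar>f x\<bar> \<le> ereal (C * exp (- r)) *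
                  esssup (lebesgue_on HP) (\<lambda>w. ereal \<bar>Lop f w\<bar>)"
proof (rule exI[of _ 1], intro conjI allI impI)
  show "0 < (1::real)" by simp
  fix f :: "complex \<Rightarrow> real" and x :: complex and r :: real
  assume h: "invariant_fun \<Gamma> f \<and> twice_diff_on f HP \<and>
           bounded (f ` HP) \<and> bounded (Lop f ` HP) \<and>
           x \<in> HP \<and> r \<ge> R \<and> hball x r \<inter> supp_HP (Lop f) = {}"
  then have f: "twice_diff_on f HP" and bf: "bounded (f ` HP)" and x: "x \<in> HP" and rR: "r \<ge> R"
    and disj: "hball x r \<inter> supp_HP (Lop f) = {}" by auto
  have r: "r > 0" using rR assms(2) by simp
  define E where "E = esssup (lebesgue_on HP) (\<lambda>w. ereal \<bar>Lop f w\<bar>)"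
  have main: "ereal \<bar>f x\<bar> \<le> ereal (exp (- r)) * E"
  proof (cases "E = \<infinity>")
    case True
    then show ?thesis by simp
  next
    case False
    have "AE w in lebesgue_on HP. ereal \<bar>Lop f w\<bar> \<le> E" unfolding E_def by (rule esssup_AE)
    then obtain N where N1: "{w \<in> space (lebesgue_on HP). \<not> ereal \<bar>Lop f w\<bar> \<le> E} \<subseteq> N"
      and N2: "N \<in> null_sets (lebesgue_on HP)"
      by (rule AE_E) (auto simp: null_sets_def)
    have "N \<in> null_sets lebesgue" using N2 null_sets_restrict_space[OF HP_leb] by blast
    then have negN: "negligible N" by (simp add: negligible_iff_null_sets)
    have LE: "ereal \<bar>Lop f z\<bar> \<le> E" if "z \<in> HP" "z \<notin> N" for z
      using N1 that by (auto simp: space_restrict_space)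
    obtain z where z: "z \<in> HP" "z \<notin> N"
      using HP_nonneg negN negligible_subset[of N HP] by blast
    have "E \<ge> 0" using LE[OF z] by (rule order_trans[rotated]) simp
    then obtain M where EM: "E = ereal M" and M: "M \<ge> 0" using False
      by (cases E) auto
    have LM: "\<bar>Lop f z\<bar> \<le> M" if "z \<in> HP" "z \<notin> N" for z using LE[OF that] EM by simp
    obtain B where B: "\<And>z. z \<in> HP \<Longrightarrow> \<bar>f z\<bar> \<le> B"
      using bf unfolding bounded_iff by auto
    define nf where "nf = (\<lambda>w. (-1) * f w + 0 * f w)"
    note NF = neg_fun[OF f, folded nf_def]
    have nfv: "nf z = - f z" for z by (simp add: nf_def)
    have NF2: "Lop nf z = - Lop f z" if "z \<in> HP" for z
      unfolding nf_def by (rule neg_fun(2)[OF f that])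
    have NF1: "twice_diff_on nf HP" unfolding nf_def by (rule neg_fun(1)[OF f])
    have up1: "f z \<le> M / 2" if "z \<in> HP" for z
      by (rule step1[OF f B negN LM that])
    have nB: "\<And>z. z \<in> HP \<Longrightarrow> \<bar>nf z\<bar> \<le> B" using B by (simp add: nfv)
    have nLM: "\<And>z. z \<in> HP \<Longrightarrow> z \<notin> N \<Longrightarrow> \<bar>Lop nf z\<bar> \<le> M"
      using LM NF2 by simp
    have up2: "nf z \<le> M / 2" if "z \<in> HP" for z
      by (rule step1[OF NF1 nB negN nLM that])
    have L0: "Lop f z = 0" if "z \<in> HP" "z \<in> hball x r" for z
    proof (rule ccontr)
      assume "Lop f z \<noteq> 0"
      then have "z \<in> {w \<in> HP. Lop f w \<noteq> 0}" using that(1) by simp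
      then have "z \<in> closure {w \<in> HP. Lop f w \<noteq> 0}" by (rule closure_subset[THEN subsetD])
      then have "z \<in> supp_HP (Lop f)" unfolding supp_HP_def using that(1) by simp
      then show False using disj that(2) by (metis IntI empty_iff)
    qed
    have s1: "f x \<le> M / (2 * cosh r)" by (rule step2[OF f up1 M x r L0])
    have nL0: "Lop nf z = 0" if "z \<in> HP" "z \<in> hball x r" for z
    proof -
      have "Lop nf z = - Lop f z" by (rule NF2[OF that(1)])
      also have "\<dots> = 0" using L0[OF that] by simp
      finally show ?thesis .
    qed
    have s2: "nf x \<le> M / (2 * cosh r)" by (rule step2[OF NF1 up2 M x r nL0])
    have "\<bar>f x\<bar> \<le> exp (- r) * M"
      using s1 s2 cosh_bound[of r M] r M unfolding nfv by linarith
    then show ?thesis unfolding EM by simp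
  qed
  then show "ereal \<bar>f x\<bar> \<le> ereal (1 * exp (- r)) * esssup (lebesgue_on HP) (\<lambda>w. ereal \<bar>Lop f w\<bar>)"
    unfolding E_def by simp
qed

end
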